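(* Let $C_\alpha>0$ and consider one of the following three setups for learning rates $\{\alpha_t\}_{t\ge0}$ and interval lengths $\{T_m\}_{m\ge0}$: (a) $\alpha_t=\frac{C_\alpha}{t+3}$ and $T_m=\frac{C_\alpha\ln^{\nu_1}(m+3)}{m+3}$ with $\nu_1\in(0,1)$; (b) $\alpha_t=\frac{C_\alpha}{(t+3)^\nu}$ with $\nu\in(\frac23,1)$ and $T_m=\frac{C_\alpha}{(m+3)^{\nu_2}}$ with $\frac12<\nu_2<\frac{\nu}{2-\nu}$; (c) $\alpha_t=\frac{C_\alpha}{(t+3)\ln^\nu(t+3)}$ with $\nu\in(0,1)$ and $T_m=\frac{C_\alpha}{m+3}$. Define $t_0=0$ and $t_{m+1}=\min\{k:\sum_{t=t_m}^{k-1}\alpha_t\ge T_m\}$ for $m\ge0$. Then there exist a constant $C$ and an integer $m_0$ such that for all $m\ge m_0$ and all $t\ge t_m$, $\alpha_t\le C\,T_m^2$. *)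

theory Defs
  imports Complex_Main
begin

fun tseq :: "(nat \<Rightarrow> real) \<Rightarrow> (nat \<Rightarrow> real) \<Rightarrow> nat \<Rightarrow> nat" where
  "tseq alpha T 0 = 0"
| "tseq alpha T (Suc m) = (LEAST k. (\<Sum>t = tseq alpha T m..<k. alpha t) \<ge> T m)"

end

theory Submission
  imports Defs "HOL-Real_Asymp.Real_Asymp"
begin


lemma tseq_step:
  fixes alpha T :: "nat \<Rightarrow> real"
  assumes apos: "\<And>t. alpha t > 0" and Tpos: "\<And>m. T m > 0"
    and unb: "\<And>A. \<exists>n. A \<le> (\<Sum>t<n. alpha t)"
  shows "(\<Sum>t<tseq alpha T m. alpha t) + T m \<le> (\<Sum>t<tseq alpha T (Suc m). alpha t)"
proof -
  define a where "a = tseq alpha T m"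
  define P where "P k \<longleftrightarrow> T m \<le> (\<Sum>t = a..<k. alpha t)" for k
  obtain n where n: "(\<Sum>t<a. alpha t) + T m \<le> (\<Sum>t<n. alpha t)" using unb by blast
  have an: "a \<le> n"
  proof (rule ccontr)
    assume "\<not> a \<le> n"
    then have "(\<Sum>t<n. alpha t) \<le> (\<Sum>t<a. alpha t)"
      by (intro sum_mono2) (auto intro: less_imp_le[OF apos])
    with n Tpos[of m] show False by linarith
  qed
  have split: "(\<Sum>t<k. alpha t) = (\<Sum>t<a. alpha t) + (\<Sum>t = a..<k. alpha t)" if "a \<le> k" for k
    using that by (simp add: lessThan_atLeast0 sum.atLeastLessThan_concat)
  have "P n" using n split[OF an] unfolding P_def by linarith
  then have PL: "P (LEAST k. P k)" by (rule LeastI)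
  have eq: "tseq alpha T (Suc m) = (LEAST k. P k)" by (simp add: P_def a_def)
  have ak: "a \<le> (LEAST k. P k)"
  proof (rule ccontr)
    assume "\<not> a \<le> (LEAST k. P k)"
    then have "(\<Sum>t = a..<(LEAST k. P k). alpha t) = 0" by simp
    with PL Tpos[of m] show False unfolding P_def by linarith
  qed
  show ?thesis using split[OF ak] PL unfolding eq P_def a_def[symmetric] by linarith
qed

lemma tseq_sum:
  fixes alpha T :: "nat \<Rightarrow> real"
  assumes apos: "\<And>t. alpha t > 0" and Tpos: "\<And>m. T m > 0"
    and unb: "\<And>A. \<exists>n. A \<le> (\<Sum>t<n. alpha t)"
  shows "(\<Sum>k<m. T k) \<le> (\<Sum>t<tseq alpha T m. alpha t)"
proof (induction m)
  case 0 then show ?case by simp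
next
  case (Suc m)
  then show ?case using tseq_step[of alpha T m, OF apos Tpos unb] by simp
qed

lemma unb_from:
  fixes S V :: "nat \<Rightarrow> real"
  assumes "\<And>n. V n \<le> S n" and "filterlim V at_top sequentially"
  shows "\<exists>n. A \<le> S n"
proof -
  from assms(2) have "eventually (\<lambda>n. A \<le> V n) sequentially" by (simp add: filterlim_at_top)
  then obtain N where "\<And>n. n \<ge> N \<Longrightarrow> A \<le> V n" by (auto simp: eventually_sequentially)
  then show ?thesis using assms(1)[of N] by (meson order.trans order_refl)
qed

lemma tele2: "(\<Sum>k<n. G (real k + 3) - G (real k + 2)) = G (real n + 2) - (G 2 :: real)"
  by (induction n) (auto simp: algebra_simps)

lemma tele3: "(\<Sum>k<n. G (real k + 4) - G (real k + 3)) = G (real n + 3) - (G 3 :: real)"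
  by (induction n) (auto simp: algebra_simps)

lemma ln_up: "x > 0 \<Longrightarrow> 1/(x+1) \<le> ln (x+1) - ln (x::real)"
proof -
  assume x: "x > 0"
  have "ln (x/(x+1)) \<le> x/(x+1) - 1" using x by (intro ln_le_minus_one) auto
  also have "x/(x+1) - 1 = -1/(x+1)" using x by (simp add: field_simps)
  finally show ?thesis using x by (simp add: ln_div)
qed

lemma ln_lo: "x > 0 \<Longrightarrow> ln (x+1) - ln (x::real) \<le> 1/x"
proof -
  assume x: "x > 0"
  have "ln ((x+1)/x) \<le> (x+1)/x - 1" using x by (intro ln_le_minus_one) auto
  also have "(x+1)/x - 1 = 1/x" using x by (simp add: field_simps)
  finally show ?thesis using x by (simp add: ln_div)
qed

lemma ln_ge1: "x \<ge> 3 \<Longrightarrow> 1 \<le> ln (x::real)"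
  using exp_le by (subst ln_ge_iff) auto



lemma case_a:
  fixes C \<nu> :: real and alpha T :: "nat \<Rightarrow> real"
  assumes C: "C > 0" and nu: "0 < \<nu>" "\<nu> < 1"
    and al: "\<And>t. alpha t = C / (real t + 3)"
    and Te: "\<And>m. T m = C * ln (real m + 3) powr \<nu> / (real m + 3)"
  shows "\<exists>M. \<forall>m\<ge>M. \<forall>t\<ge>tseq alpha T m. alpha t \<le> (1/C) * (T m)^2"
proof -
  define F where "F x = ln x powr (1+\<nu>) / (1+\<nu>)" for x :: real
  have apos: "\<And>t. alpha t > 0" using C by (simp add: al)
  have Tpos: "\<And>m. T m > 0" using C ln_ge1 by (simp add: Te)
  have Sup: "(\<Sum>t<n. alpha t) \<le> C * (ln (real n + 2) - ln 2)" for n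
  proof -
    have "(\<Sum>t<n. alpha t) \<le> (\<Sum>k<n. C * (ln (real k + 3) - ln (real k + 2)))"
    proof (rule sum_mono)
      fix k assume "k \<in> {..<n}"
      have "1/(real k + 2 + 1) \<le> ln (real k + 2 + 1) - ln (real k + 2)" by (rule ln_up) auto
      then have "1/(real k + 3) \<le> ln (real k + 3) - ln (real k + 2)" by (simp add: add.assoc)
      then have "C * (1/(real k + 3)) \<le> C * (ln (real k + 3) - ln (real k + 2))"
        using C by (intro mult_left_mono) auto
      then show "alpha k \<le> C * (ln (real k + 3) - ln (real k + 2))" by (simp add: al)
    qed
    also have "\<dots> = C * (ln (real n + 2) - ln 2)"
      using tele2[of ln n] by (simp add: sum_distrib_left[symmetric])
    finally show ?thesis .
  qed
  have Slo: "C * (ln (real n + 3) - ln 3) \<le> (\<Sum>t<n. alpha t)" for n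
  proof -
    have "C * (ln (real n + 3) - ln 3) = (\<Sum>k<n. C * (ln (real k + 4) - ln (real k + 3)))"
      using tele3[of ln n] by (simp add: sum_distrib_left[symmetric])
    also have "\<dots> \<le> (\<Sum>t<n. alpha t)"
    proof (rule sum_mono)
      fix k assume "k \<in> {..<n}"
      have "ln (real k + 3 + 1) - ln (real k + 3) \<le> 1/(real k + 3)" by (rule ln_lo) auto
      then have "ln (real k + 4) - ln (real k + 3) \<le> 1/(real k + 3)" by (simp add: add.assoc)
      then have "C * (ln (real k + 4) - ln (real k + 3)) \<le> C * (1/(real k + 3))"
        using C by (intro mult_left_mono) auto
      then show "C * (ln (real k + 4) - ln (real k + 3)) \<le> alpha k" by (simp add: al)
    qed
    finally show ?thesis .
  qed
  have unb: "\<And>A. \<exists>n. A \<le> (\<Sum>t<n. alpha t)"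
    by (rule unb_from[OF Slo]) (use C in real_asymp)
  have Tlo: "C/2 * (F (real k + 3) - F (real k + 2)) \<le> T k" for k
  proof -
    have "\<exists>z. real k + 2 < z \<and> z < real k + 3 \<and> F (real k + 3) - F (real k + 2) = (real k + 3 - (real k + 2)) * (ln z powr \<nu> / z)"
    proof (rule MVT2)
      fix x assume x: "real k + 2 \<le> x" "x \<le> real k + 3"
      have "ln x > 0" using x by simp
      have "(F has_real_derivative ((1+\<nu>) * ln x powr (1+\<nu>-1) * (1/x)) / (1+\<nu>)) (at x)"
        unfolding F_def using x \<open>ln x > 0\<close> nu
        by (auto intro!: derivative_eq_intros)
      moreover have "((1+\<nu>) * ln x powr (1+\<nu>-1) * (1/x)) / (1+\<nu>) = ln x powr \<nu> / x"
        using nu by simp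
      ultimately show "(F has_real_derivative ln x powr \<nu> / x) (at x)" by simp
    qed auto
    then obtain z where z: "real k + 2 < z" "z < real k + 3" "F (real k + 3) - F (real k + 2) = ln z powr \<nu> / z"
      by auto
    have "ln z powr \<nu> \<le> ln (real k + 3) powr \<nu>"
      using z nu by (intro powr_mono2) auto
    then have "ln z powr \<nu> / z \<le> ln (real k + 3) powr \<nu> / z" using z
      by (intro divide_right_mono) auto
    also have "\<dots> \<le> ln (real k + 3) powr \<nu> / ((real k + 3)/2)"
      using z by (intro divide_left_mono) auto
    also have "\<dots> = 2 * (ln (real k + 3) powr \<nu> / (real k + 3))" by simp
    finally have "F (real k + 3) - F (real k + 2) \<le> 2 * (ln (real k + 3) powr \<nu> / (real k + 3))"
      using z(3) by simp
    then have "C/2 * (F (real k + 3) - F (real k + 2)) \<le> C/2 * (2 * (ln (real k + 3) powr \<nu> / (real k + 3)))"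
      using C by (intro mult_left_mono) auto
    then show ?thesis by (simp add: Te)
  qed
  have Tsum: "C/2 * (F (real m + 2) - F 2) \<le> (\<Sum>k<m. T k)" for m
  proof -
    have "C/2 * (F (real m + 2) - F 2) = (\<Sum>k<m. C/2 * (F (real k + 3) - F (real k + 2)))"
      using tele2[of F m] by (simp only: sum_distrib_left[symmetric])
    also have "\<dots> \<le> (\<Sum>k<m. T k)" by (rule sum_mono) (rule Tlo)
    finally show ?thesis .
  qed
  have ev: "eventually (\<lambda>m::nat. 2*ln(real m+3) \<le> (F (real m + 2) - F 2)/2) at_top"
    unfolding F_def using nu by real_asymp
  then obtain M where M: "\<And>m. m \<ge> M \<Longrightarrow> 2*ln(real m+3) \<le> (F (real m + 2) - F 2)/2"
    by (auto simp: eventually_sequentially)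
  show ?thesis
  proof (intro exI allI impI)
    fix m t assume m: "M \<le> m" and t: "tseq alpha T m \<le> t"
    define t0 where "t0 = tseq alpha T m"
    have "C * (2*ln(real m+3)) \<le> C/2 * (F (real m + 2) - F 2)"
      using M[OF m] C by simp
    also have "\<dots> \<le> (\<Sum>t<t0. alpha t)" unfolding t0_def
      using Tsum[of m] tseq_sum[of alpha T m, OF apos Tpos unb] by linarith
    also have "\<dots> \<le> C * (ln (real t0 + 2) - ln 2)" by (rule Sup)
    finally have "2*ln(real m+3) \<le> ln (real t0 + 2) - ln 2" using C by simp
    moreover have "0 \<le> ln (2::real)" by simp
    ultimately have "2*ln(real m+3) \<le> ln (real t0 + 2)" by linarith
    then have "ln ((real m + 3)^2) \<le> ln (real t0 + 2)" by (simp add: ln_realpow)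
    then have sq: "(real m + 3)^2 \<le> real t0 + 3" by (subst (asm) ln_le_cancel_iff) auto
    have L: "1 \<le> ln (real m + 3) powr \<nu>" using ln_ge1[of "real m + 3"] nu
      by (intro ge_one_powr_ge_zero) auto
    have "alpha t = C / (real t + 3)" by (rule al)
    also have "\<dots> \<le> C / (real t0 + 3)" using t C unfolding t0_def by (intro divide_left_mono) auto
    also have "\<dots> \<le> C / (real m + 3)^2" using sq C by (intro divide_left_mono) auto
    also have "\<dots> \<le> C * (ln (real m + 3) powr \<nu>)^2 / (real m + 3)^2"
      using C L by (intro divide_right_mono) (auto simp: one_le_power)
    also have "\<dots> = (1/C) * (T m)^2" using C by (simp add: Te power2_eq_square field_simps)
    finally show "alpha t \<le> (1/C) * (T m)^2" .
  qed
qed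



lemma case_c:
  fixes C \<nu> :: real and alpha T :: "nat \<Rightarrow> real"
  assumes C: "C > 0" and nu: "0 < \<nu>" "\<nu> < 1"
    and al: "\<And>t. alpha t = C / ((real t + 3) * ln (real t + 3) powr \<nu>)"
    and Te: "\<And>m. T m = C / (real m + 3)"
  shows "\<exists>M. \<forall>m\<ge>M. \<forall>t\<ge>tseq alpha T m. alpha t \<le> (1/C) * (T m)^2"
proof -
  define G where "G x = ln x powr (1-\<nu>) / (1-\<nu>)" for x :: real
  define g where "g x = 1 / (x * ln x powr \<nu>)" for x :: real
  have apos: "\<And>t. alpha t > 0" using C ln_ge1 by (simp add: al)
  have Tpos: "\<And>m. T m > 0" using C by (simp add: Te)
  have al': "alpha k = C * g (real k + 3)" for k by (simp add: al g_def)
  have gmono: "g y \<le> g x" if "1 < x" "x \<le> y" for x y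
  proof -
    have "ln x powr \<nu> \<le> ln y powr \<nu>" using that nu by (intro powr_mono2) auto
    moreover have "0 < ln x powr \<nu>" using that by simp
    ultimately have "x * ln x powr \<nu> \<le> y * ln y powr \<nu>" using that
      by (intro mult_mono) auto
    then show ?thesis unfolding g_def using that \<open>0 < ln x powr \<nu>\<close>
      by (intro divide_left_mono) auto
  qed
  have mvt: "\<exists>z. a < z \<and> z < a + 1 \<and> G (a + 1) - G a = g z" if "a \<ge> 2" for a
  proof -
    have "\<exists>z. a < z \<and> z < a + 1 \<and> G (a + 1) - G a = (a + 1 - a) * g z"
    proof (rule MVT2)
      fix x assume x: "a \<le> x" "x \<le> a + 1"
      have "ln x > 0" using x that by simp
      have "(G has_real_derivative ((1-\<nu>) * ln x powr (1-\<nu>-1) * (1/x)) / (1-\<nu>)) (at x)"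
        unfolding G_def using x that \<open>ln x > 0\<close> nu
        by (auto intro!: derivative_eq_intros)
      moreover have "((1-\<nu>) * ln x powr (1-\<nu>-1) * (1/x)) / (1-\<nu>) = g x"
        using nu \<open>ln x > 0\<close> by (simp add: g_def powr_minus_divide powr_diff)
      ultimately show "(G has_real_derivative g x) (at x)" by simp
    qed auto
    then show ?thesis by simp
  qed
  have Sup: "(\<Sum>t<n. alpha t) \<le> C * (G (real n + 2) - G 2)" for n
  proof -
    have "(\<Sum>t<n. alpha t) \<le> (\<Sum>k<n. C * (G (real k + 3) - G (real k + 2)))"
    proof (rule sum_mono)
      fix k assume "k \<in> {..<n}"
      obtain z where z: "real k + 2 < z" "z < real k + 2 + 1" "G (real k + 2 + 1) - G (real k + 2) = g z"
        using mvt[of "real k + 2"] by auto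
      have "g (real k + 3) \<le> g z" using z by (intro gmono) auto
      then have "C * g (real k + 3) \<le> C * (G (real k + 3) - G (real k + 2))"
        using C z(3) by (simp add: add.assoc)
      then show "alpha k \<le> C * (G (real k + 3) - G (real k + 2))" by (simp add: al')
    qed
    also have "\<dots> = C * (G (real n + 2) - G 2)"
      using tele2[of G n] by (simp only: sum_distrib_left[symmetric])
    finally show ?thesis .
  qed
  have Slo: "C * (G (real n + 3) - G 3) \<le> (\<Sum>t<n. alpha t)" for n
  proof -
    have "C * (G (real n + 3) - G 3) = (\<Sum>k<n. C * (G (real k + 4) - G (real k + 3)))"
      using tele3[of G n] by (simp only: sum_distrib_left[symmetric])
    also have "\<dots> \<le> (\<Sum>t<n. alpha t)"
    proof (rule sum_mono)
      fix k assume "k \<in> {..<n}"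
      obtain z where z: "real k + 3 < z" "z < real k + 3 + 1" "G (real k + 3 + 1) - G (real k + 3) = g z"
        using mvt[of "real k + 3"] by auto
      have "g z \<le> g (real k + 3)" using z by (intro gmono) auto
      then have "C * (G (real k + 4) - G (real k + 3)) \<le> C * g (real k + 3)"
        using C z(3) by (simp add: add.assoc)
      then show "C * (G (real k + 4) - G (real k + 3)) \<le> alpha k" by (simp add: al')
    qed
    finally show ?thesis .
  qed
  have unb: "\<And>A. \<exists>n. A \<le> (\<Sum>t<n. alpha t)"
    by (rule unb_from[OF Slo]) (use C nu in \<open>unfold G_def, real_asymp\<close>)
  have Tsum: "C * (ln (real m + 3) - ln 3) \<le> (\<Sum>k<m. T k)" for m
  proof -
    have "C * (ln (real m + 3) - ln 3) = (\<Sum>k<m. C * (ln (real k + 4) - ln (real k + 3)))"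
      using tele3[of ln m] by (simp only: sum_distrib_left[symmetric])
    also have "\<dots> \<le> (\<Sum>k<m. T k)"
    proof (rule sum_mono)
      fix k assume "k \<in> {..<m}"
      have "ln (real k + 3 + 1) - ln (real k + 3) \<le> 1/(real k + 3)" by (rule ln_lo) auto
      then have "ln (real k + 4) - ln (real k + 3) \<le> 1/(real k + 3)" by (simp add: add.assoc)
      then have "C * (ln (real k + 4) - ln (real k + 3)) \<le> C * (1/(real k + 3))"
        using C by (intro mult_left_mono) auto
      then show "C * (ln (real k + 4) - ln (real k + 3)) \<le> T k" by (simp add: Te)
    qed
    finally show ?thesis .
  qed
  have ev: "eventually (\<lambda>m::nat. (2*ln(real m+3)) powr (1-\<nu>) \<le> (1-\<nu>)*(ln(real m+3) - ln 3)) at_top"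
    using nu by real_asymp
  then obtain M where M: "\<And>m. m \<ge> M \<Longrightarrow> (2*ln(real m+3)) powr (1-\<nu>) \<le> (1-\<nu>)*(ln(real m+3) - ln 3)"
    by (auto simp: eventually_sequentially)
  show ?thesis
  proof (intro exI allI impI)
    fix m t assume m: "M \<le> m" and t: "tseq alpha T m \<le> t"
    define t0 where "t0 = tseq alpha T m"
    have "C * (ln (real m + 3) - ln 3) \<le> (\<Sum>t<t0. alpha t)" unfolding t0_def
      using Tsum[of m] tseq_sum[of alpha T m, OF apos Tpos unb] by linarith
    also have "\<dots> \<le> C * (G (real t0 + 2) - G 2)" by (rule Sup)
    finally have "ln (real m + 3) - ln 3 \<le> G (real t0 + 2) - G 2" using C by simp
    moreover have "0 \<le> G 2" unfolding G_def using nu by simp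
    ultimately have "ln (real m + 3) - ln 3 \<le> G (real t0 + 2)" by linarith
    then have "(1-\<nu>) * (ln (real m + 3) - ln 3) \<le> ln (real t0 + 2) powr (1-\<nu>)"
      using nu unfolding G_def by (simp add: field_simps)
    with M[OF m] have le: "(2*ln(real m+3)) powr (1-\<nu>) \<le> ln (real t0 + 2) powr (1-\<nu>)" by linarith
    have "2*ln(real m+3) \<le> ln (real t0 + 2)"
    proof (rule ccontr)
      assume "\<not> ?thesis"
      then have "ln (real t0 + 2) powr (1-\<nu>) < (2*ln(real m+3)) powr (1-\<nu>)"
        using nu by (intro powr_less_mono2) auto
      with le show False by linarith
    qed
    then have "ln ((real m + 3)^2) \<le> ln (real t0 + 2)" by (simp add: ln_realpow)
    then have sq: "(real m + 3)^2 \<le> real t0 + 3" by (subst (asm) ln_le_cancel_iff) auto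
    have L: "1 \<le> ln (real t + 3) powr \<nu>" using ln_ge1[of "real t + 3"] nu
      by (intro ge_one_powr_ge_zero) auto
    have "alpha t = C / ((real t + 3) * ln (real t + 3) powr \<nu>)" by (rule al)
    also have "\<dots> \<le> C / (real t + 3)" using C L
      by (intro divide_left_mono) (auto intro: mult_le_cancel_left1[THEN iffD2])
    also have "\<dots> \<le> C / (real t0 + 3)" using t C unfolding t0_def by (intro divide_left_mono) auto
    also have "\<dots> \<le> C / (real m + 3)^2" using sq C by (intro divide_left_mono) auto
    also have "\<dots> = (1/C) * (T m)^2" using C by (simp add: Te power2_eq_square field_simps)
    finally show "alpha t \<le> (1/C) * (T m)^2" .
  qed
qed



lemma mvt_pow:
  fixes p a :: real
  assumes p: "0 < p" "p < 1" and a: "a > 0"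
  shows "\<exists>z. a < z \<and> z < a + 1 \<and> (a+1) powr (1-p)/(1-p) - a powr (1-p)/(1-p) = 1 / z powr p"
proof -
  have "\<exists>z. a < z \<and> z < a + 1 \<and> (\<lambda>x. x powr (1-p)/(1-p)) (a+1) - (\<lambda>x. x powr (1-p)/(1-p)) a = (a + 1 - a) * (1 / z powr p)"
  proof (rule MVT2)
    fix x assume x: "a \<le> x" "x \<le> a + 1"
    have "((\<lambda>x. x powr (1-p)/(1-p)) has_real_derivative ((1-p) * x powr (1-p-1)) / (1-p)) (at x)"
      using x a by (auto intro!: derivative_eq_intros)
    moreover have "((1-p) * x powr (1-p-1)) / (1-p) = 1 / x powr p"
      using p x a by (simp add: powr_minus_divide)
    ultimately show "((\<lambda>x. x powr (1-p)/(1-p)) has_real_derivative 1 / x powr p) (at x)" by simp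
  qed auto
  then show ?thesis by simp
qed

lemma powmono: "0 < x \<Longrightarrow> x \<le> y \<Longrightarrow> 0 \<le> (p::real) \<Longrightarrow> 1 / y powr p \<le> 1 / x powr p"
  by (intro divide_left_mono powr_mono2 mult_pos_pos) auto

lemma sum_pow_up:
  fixes p :: real
  assumes p: "0 < p" "p < 1"
  shows "(\<Sum>k<n. 1 / (real k + 3) powr p) \<le> (real n + 2) powr (1-p)/(1-p) - 2 powr (1-p)/(1-p)"
proof -
  define G where "G x = x powr (1-p)/(1-p)" for x :: real
  have "(\<Sum>k<n. 1 / (real k + 3) powr p) \<le> (\<Sum>k<n. G (real k + 3) - G (real k + 2))"
  proof (rule sum_mono)
    fix k assume "k \<in> {..<n}"
    obtain z where z: "real k + 2 < z" "z < real k + 2 + 1"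
      "G (real k + 2 + 1) - G (real k + 2) = 1 / z powr p"
      using mvt_pow[OF p, of "real k + 2"] unfolding G_def by auto
    have "1 / (real k + 3) powr p \<le> 1 / z powr p" using z p by (intro powmono) auto
    then show "1 / (real k + 3) powr p \<le> G (real k + 3) - G (real k + 2)"
      using z(3) by (simp add: add.assoc)
  qed
  also have "\<dots> = G (real n + 2) - G 2" by (rule tele2)
  finally show ?thesis unfolding G_def .
qed

lemma sum_pow_lo:
  fixes p :: real
  assumes p: "0 < p" "p < 1"
  shows "(real n + 3) powr (1-p)/(1-p) - 3 powr (1-p)/(1-p) \<le> (\<Sum>k<n. 1 / (real k + 3) powr p)"
proof -
  define G where "G x = x powr (1-p)/(1-p)" for x :: real
  have "G (real n + 3) - G 3 = (\<Sum>k<n. G (real k + 4) - G (real k + 3))" by (rule tele3[symmetric])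
  also have "\<dots> \<le> (\<Sum>k<n. 1 / (real k + 3) powr p)"
  proof (rule sum_mono)
    fix k assume "k \<in> {..<n}"
    obtain z where z: "real k + 3 < z" "z < real k + 3 + 1"
      "G (real k + 3 + 1) - G (real k + 3) = 1 / z powr p"
      using mvt_pow[OF p, of "real k + 3"] unfolding G_def by auto
    have "1 / z powr p \<le> 1 / (real k + 3) powr p" using z p by (intro powmono) auto
    then show "G (real k + 4) - G (real k + 3) \<le> 1 / (real k + 3) powr p"
      using z(3) by (simp add: add.assoc)
  qed
  finally show ?thesis unfolding G_def .
qed

lemma ev_pow:
  fixes e d c :: real
  assumes "0 < e" "e < d" "c > 0"
  shows "eventually (\<lambda>m::nat. (real m+3) powr e \<le> c*((real m+3) powr d - 3 powr d)) at_top"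
  using assms by real_asymp

lemma alg: "(d::real) \<noteq> 0 \<Longrightarrow> (k/d)*(A-B) = k*(A/d - B/d)"
  by (simp add: field_simps)

lemma case_b:
  fixes C \<nu> \<nu>2 :: real and alpha T :: "nat \<Rightarrow> real"
  assumes C: "C > 0" and nu: "2/3 < \<nu>" "\<nu> < 1" "1/2 < \<nu>2" "\<nu>2 < \<nu> / (2 - \<nu>)"
    and al: "\<And>t. alpha t = C / (real t + 3) powr \<nu>"
    and Te: "\<And>m. T m = C / (real m + 3) powr \<nu>2"
  shows "\<exists>M. \<forall>m\<ge>M. \<forall>t\<ge>tseq alpha T m. alpha t \<le> (1/C) * (T m)^2"
proof -
  have nu0: "0 < \<nu>" using nu by linarith
  have "\<nu> / (2 - \<nu>) < 1" using nu by (simp add: divide_less_eq)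
  then have nu2: "\<nu>2 < 1" using nu by linarith
  have nu20: "0 < \<nu>2" using nu by linarith
  define e where "e = 2 * \<nu>2 * (1-\<nu>) / \<nu>"
  define d where "d = 1 - \<nu>2"
  define c where "c = (1-\<nu>)/(1-\<nu>2)"
  have e0: "0 < e" unfolding e_def using nu nu20 by (intro divide_pos_pos mult_pos_pos) auto
  have "\<nu>2 * (2 - \<nu>) < \<nu>" using nu by (simp add: field_simps)
  then have ed: "e < d" unfolding e_def d_def using nu0 by (simp add: field_simps)
  have c0: "c > 0" unfolding c_def using nu nu2 by simp
  have apos: "\<And>t. alpha t > 0" using C by (simp add: al)
  have Tpos: "\<And>m. T m > 0" using C by (simp add: Te)
  have Ssum: "(\<Sum>t<n. alpha t) = C * (\<Sum>k<n. 1 / (real k + 3) powr \<nu>)" for n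
    by (simp add: al sum_distrib_left)
  have Tsum': "(\<Sum>k<m. T k) = C * (\<Sum>k<m. 1 / (real k + 3) powr \<nu>2)" for m
    by (simp add: Te sum_distrib_left)
  have unb: "\<And>A. \<exists>n. A \<le> (\<Sum>t<n. alpha t)"
  proof (rule unb_from)
    show "C * ((real n + 3) powr (1-\<nu>)/(1-\<nu>) - 3 powr (1-\<nu>)/(1-\<nu>)) \<le> (\<Sum>t<n. alpha t)" for n
      unfolding Ssum using sum_pow_lo[OF nu0 nu(2), of n] C by (intro mult_left_mono) auto
    show "filterlim (\<lambda>n. C * ((real n + 3) powr (1-\<nu>)/(1-\<nu>) - 3 powr (1-\<nu>)/(1-\<nu>))) at_top sequentially"
      using C nu by real_asymp
  qed
  obtain M where M: "\<And>m. m \<ge> M \<Longrightarrow> (real m+3) powr e \<le> c*((real m+3) powr d - 3 powr d)"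
    using ev_pow[OF e0 ed c0] by (auto simp: eventually_sequentially)
  show ?thesis
  proof (intro exI allI impI)
    fix m t assume m: "M \<le> m" and t: "tseq alpha T m \<le> t"
    define t0 where "t0 = tseq alpha T m"
    have "C * ((real m + 3) powr d/d - 3 powr d/d) \<le> (\<Sum>k<m. T k)"
      unfolding Tsum' d_def using sum_pow_lo[OF nu20 nu2, of m] C by (intro mult_left_mono) auto
    also have "\<dots> \<le> (\<Sum>t<t0. alpha t)" unfolding t0_def
      using tseq_sum[of alpha T m, OF apos Tpos unb] by linarith
    also have "\<dots> \<le> C * ((real t0 + 2) powr (1-\<nu>)/(1-\<nu>) - 2 powr (1-\<nu>)/(1-\<nu>))"
      unfolding Ssum using sum_pow_up[OF nu0 nu(2), of t0] C by (intro mult_left_mono) auto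
    finally have "(real m + 3) powr d/d - 3 powr d/d \<le> (real t0 + 2) powr (1-\<nu>)/(1-\<nu>) - 2 powr (1-\<nu>)/(1-\<nu>)"
      using C by simp
    moreover have "0 \<le> 2 powr (1-\<nu>)/(1-\<nu>)" using nu by simp
    ultimately have "(real m + 3) powr d/d - 3 powr d/d \<le> (real t0 + 2) powr (1-\<nu>)/(1-\<nu>)" by linarith
    then have "(1-\<nu>) * ((real m + 3) powr d/d - 3 powr d/d) \<le> (1-\<nu>) * ((real t0 + 2) powr (1-\<nu>)/(1-\<nu>))"
      using nu by (intro mult_left_mono) auto
    moreover have "(1-\<nu>) * ((real t0 + 2) powr (1-\<nu>)/(1-\<nu>)) = (real t0 + 2) powr (1-\<nu>)"
      using nu by simp
    moreover have "c * ((real m + 3) powr d - 3 powr d) = (1-\<nu>) * ((real m + 3) powr d/d - 3 powr d/d)"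
      unfolding c_def d_def using nu2 alg[of "1-\<nu>2" "1-\<nu>"] by simp
    ultimately have "c * ((real m + 3) powr d - 3 powr d) \<le> (real t0 + 2) powr (1-\<nu>)"
      by linarith
    with M[OF m] have le: "(real m+3) powr e \<le> (real t0 + 2) powr (1-\<nu>)" by linarith
    define p where "p = \<nu> / (1-\<nu>)"
    have p0: "p > 0" unfolding p_def using nu nu0 by simp
    have "((real m+3) powr e) powr p \<le> ((real t0 + 2) powr (1-\<nu>)) powr p"
      using le p0 by (intro powr_mono2) auto
    moreover have "e * p = 2 * \<nu>2" unfolding e_def p_def using nu nu0 by (simp add: field_simps)
    moreover have "(1-\<nu>) * p = \<nu>" unfolding p_def using nu by simp
    ultimately have le2: "(real m+3) powr (2*\<nu>2) \<le> (real t0 + 2) powr \<nu>" by (simp add: powr_powr)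
    have "(real m+3) powr (2*\<nu>2) = ((real m + 3) powr \<nu>2)^2"
      by (simp add: power2_eq_square powr_add[symmetric])
    then have le3: "((real m + 3) powr \<nu>2)^2 \<le> (real t + 3) powr \<nu>"
      using le2 powr_mono2[of \<nu> "real t0 + 2" "real t + 3"] nu0 t unfolding t0_def by simp
    have "alpha t = C / (real t + 3) powr \<nu>" by (rule al)
    also have "\<dots> \<le> C / ((real m + 3) powr \<nu>2)^2" using le3 C
      by (intro divide_left_mono) auto
    also have "\<dots> = (1/C) * (T m)^2" using C by (simp add: Te power2_eq_square field_simps)
    finally show "alpha t \<le> (1/C) * (T m)^2" .
  qed
qed

theorem lemma1:
  fixes C\<^sub>\<alpha> :: real and alpha T :: "nat \<Rightarrow> real"
  assumes "C\<^sub>\<alpha> > 0"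
    and "(\<exists>\<nu>1. 0 < \<nu>1 \<and> \<nu>1 < 1 \<and>
            (\<forall>t. alpha t = C\<^sub>\<alpha> / (real t + 3)) \<and>
            (\<forall>m. T m = C\<^sub>\<alpha> * (ln (real m + 3)) powr \<nu>1 / (real m + 3)))
       \<or> (\<exists>\<nu> \<nu>2. 2/3 < \<nu> \<and> \<nu> < 1 \<and> 1/2 < \<nu>2 \<and> \<nu>2 < \<nu> / (2 - \<nu>) \<and>
            (\<forall>t. alpha t = C\<^sub>\<alpha> / (real t + 3) powr \<nu>) \<and>
            (\<forall>m. T m = C\<^sub>\<alpha> / (real m + 3) powr \<nu>2))
       \<or> (\<exists>\<nu>. 0 < \<nu> \<and> \<nu> < 1 \<and>
            (\<forall>t. alpha t = C\<^sub>\<alpha> / ((real t + 3) * (ln (real t + 3)) powr \<nu>)) \<and>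
            (\<forall>m. T m = C\<^sub>\<alpha> / (real m + 3)))"
  shows "\<exists>C::real. \<exists>m0::nat. \<forall>m \<ge> m0. \<forall>t \<ge> tseq alpha T m. alpha t \<le> C * (T m)\<^sup>2"
  proof -
  have "\<exists>M. \<forall>m\<ge>M. \<forall>t\<ge>tseq alpha T m. alpha t \<le> (1/C\<^sub>\<alpha>) * (T m)^2"
    using assms(2)
  proof (elim disjE exE conjE)
    fix \<nu>1 assume "0 < \<nu>1" "\<nu>1 < 1" "\<forall>t. alpha t = C\<^sub>\<alpha> / (real t + 3)"
      "\<forall>m. T m = C\<^sub>\<alpha> * (ln (real m + 3)) powr \<nu>1 / (real m + 3)"
    then show ?thesis using case_a[OF assms(1), of \<nu>1 alpha T] by blast
  next
    fix \<nu> \<nu>2 assume "2/3 < \<nu>" "\<nu> < 1" "1/2 < \<nu>2" "\<nu>2 < \<nu> / (2 - \<nu>)"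
      "\<forall>t. alpha t = C\<^sub>\<alpha> / (real t + 3) powr \<nu>" "\<forall>m. T m = C\<^sub>\<alpha> / (real m + 3) powr \<nu>2"
    then show ?thesis using case_b[OF assms(1), of \<nu> \<nu>2 alpha T] by blast
  next
    fix \<nu> assume "0 < \<nu>" "\<nu> < 1"
      "\<forall>t. alpha t = C\<^sub>\<alpha> / ((real t + 3) * (ln (real t + 3)) powr \<nu>)"
      "\<forall>m. T m = C\<^sub>\<alpha> / (real m + 3)"
    then show ?thesis using case_c[OF assms(1), of \<nu> alpha T] by blast
  qed
  then show ?thesis by blast
qed

end
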